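(* Let $\mathbf{L}$ be a finite distributive lattice and $m,n\ge1$ integers. Let $\mathbf{D}_{n,m}:=(\mathbf{2}^n)^m$, where $\mathbf{2}^n$ is the Boolean lattice with $n$ atoms, and let $P_{n,m}\subseteq\mathbf{D}_{n,m}$ be the set of tuples $(a_1,\dots,a_m)$ with $a_i\neq 0$ for every $i$. Then a subset $F\subseteq\mathbf{L}$ is an $m$-prime $n$-filter if and only if $F=h^{-1}[P_{n,m}]$ for some lattice homomorphism $h\colon\mathbf{L}\to\mathbf{D}_{n,m}$.
   Context: For a set $X$, $Y\subseteq_n X$ means $Y$ is a non-empty subset of $X$ with $|Y|\le n$. An $n$-filter on a lattice is an upset $F$ such that for every non-empty finite $X\subseteq F$: if $\bigwedge Y\in F$ for every $Y\subseteq_n X$ then $\bigwedge X\in F$. The $n$-filters of $\mathbf{L}$ form a lattice $\mathrm{Fi}_n\mathbf{L}$ under inclusion. An $n$-filter $F$ is $m$-prime if for every non-empty finite family $(F_i)_{i\in I}$ of $n$-filters with $\bigcap_{i\in I}F_i\subseteq F$ there is $J\subseteq I$ with $1\le|J|\le m$ and $\bigcap_{j\in J}F_j\subseteq F$. The empty set and $\mathbf{L}$ count as $m$-prime $n$-filters. Lattice homomorphisms need not preserve bounds. *)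

theory Defs
  imports Main
begin

definition n_filter :: "nat \<Rightarrow> 'a::lattice set \<Rightarrow> bool" where
  "n_filter n F \<longleftrightarrow>
     (\<forall>x y. x \<in> F \<and> x \<le> y \<longrightarrow> y \<in> F) \<and>
     (\<forall>X. finite X \<and> X \<noteq> {} \<and> X \<subseteq> F \<and>
          (\<forall>Y. Y \<subseteq> X \<and> Y \<noteq> {} \<and> card Y \<le> n \<longrightarrow> Inf_fin Y \<in> F)
          \<longrightarrow> Inf_fin X \<in> F)"

text \<open>m-prime n-filters; by convention the empty set and the whole lattice count.\<close>
definition m_prime_n_filter :: "nat \<Rightarrow> nat \<Rightarrow> 'a::lattice set \<Rightarrow> bool" where
  "m_prime_n_filter n m F \<longleftrightarrow> n_filter n F \<and>
     (F = {} \<or> F = UNIV \<or>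
      (\<forall>(I::nat set) (Fs::nat \<Rightarrow> 'a set).
          finite I \<and> I \<noteq> {} \<and> (\<forall>i\<in>I. n_filter n (Fs i)) \<and> (\<Inter>i\<in>I. Fs i) \<subseteq> F
          \<longrightarrow> (\<exists>J\<subseteq>I. J \<noteq> {} \<and> card J \<le> m \<and> (\<Inter>j\<in>J. Fs j) \<subseteq> F)))"

text \<open>D_{n,m} = (2^n)^m, represented as functions nat \<Rightarrow> nat set that map each
  coordinate i < m to a subset of {..<n} and are {} outside; lattice operations
  are pointwise intersection / union.\<close>
definition D :: "nat \<Rightarrow> nat \<Rightarrow> (nat \<Rightarrow> nat set) set" where
  "D n m = {f. (\<forall>i<m. f i \<subseteq> {..<n}) \<and> (\<forall>i\<ge>m. f i = {})}"

definition P :: "nat \<Rightarrow> nat \<Rightarrow> (nat \<Rightarrow> nat set) set" where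
  "P n m = {f \<in> D n m. \<forall>i<m. f i \<noteq> {}}"

text \<open>Lattice homomorphism L \<rightarrow> D_{n,m} (bounds need not be preserved).\<close>
definition lattice_hom_D :: "nat \<Rightarrow> nat \<Rightarrow> ('a::lattice \<Rightarrow> (nat \<Rightarrow> nat set)) \<Rightarrow> bool" where
  "lattice_hom_D n m h \<longleftrightarrow> (\<forall>x. h x \<in> D n m) \<and>
     (\<forall>x y. h (inf x y) = (\<lambda>i. h x i \<inter> h y i)) \<and>
     (\<forall>x y. h (sup x y) = (\<lambda>i. h x i \<union> h y i))"

end

theory Submission
  imports Defs
begin

definition jp :: "'a::lattice \<Rightarrow> bool" where
  "jp p \<longleftrightarrow> (\<forall>u v. p \<le> sup u v \<longrightarrow> p \<le> u \<or> p \<le> v)"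

lemma pft:
  fixes z a :: "'a::{finite,distrib_lattice}"
  assumes "\<not> z \<le> a"
  shows "\<exists>p. jp p \<and> p \<le> z \<and> \<not> p \<le> a"
proof -
  let ?A = "{x. x \<le> z \<and> \<not> x \<le> a}"
  have "finite ?A" by simp
  moreover have "z \<in> ?A" using assms by simp
  ultimately obtain p where p: "p \<in> ?A" and pm: "\<forall>b\<in>?A. b \<le> p \<longrightarrow> p = b"
    using finite_has_minimal2 by blast
  have "jp p" unfolding jp_def
  proof (intro allI impI)
    fix u v assume puv: "p \<le> sup u v"
    show "p \<le> u \<or> p \<le> v"
    proof (rule ccontr)
      assume nn: "\<not> (p \<le> u \<or> p \<le> v)"
      have e: "p = sup (inf p u) (inf p v)"
        using puv by (metis inf.absorb1 inf_sup_distrib1)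
      have "inf p u \<le> a"
      proof (rule ccontr)
        assume "\<not> inf p u \<le> a"
        hence "inf p u \<in> ?A" using p le_infI1[of p z u] by auto
        hence "p = inf p u" using pm by auto
        thus False using nn by (metis inf.cobounded2)
      qed
      moreover have "inf p v \<le> a"
      proof (rule ccontr)
        assume "\<not> inf p v \<le> a"
        hence "inf p v \<in> ?A" using p le_infI1[of p z v] by auto
        hence "p = inf p v" using pm by auto
        thus False using nn by (metis inf.cobounded2)
      qed
      ultimately have "p \<le> a" using e by (metis sup_least)
      thus False using p by auto
    qed
  qed
  thus ?thesis using p by auto
qed

lemma hom_mono:
  assumes "lattice_hom_D n m h" "x \<le> y"
  shows "h x i \<subseteq> h y i"
proof -
  have "h x = h (inf x y)" using assms(2) by (simp add: inf.absorb1)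
  also have "\<dots> = (\<lambda>i. h x i \<inter> h y i)" using assms(1) unfolding lattice_hom_D_def by blast
  finally show ?thesis by (metis Int_lower2)
qed

lemma hom_Inf_fin:
  assumes "lattice_hom_D n m h" "finite Y" "Y \<noteq> {}"
  shows "h (Inf_fin Y) i = (\<Inter>y\<in>Y. h y i)"
  using assms(2,3)
proof (induction Y rule: finite_ne_induct)
  case (singleton x) then show ?case by simp
next
  case (insert x F)
  then show ?case using assms(1) unfolding lattice_hom_D_def by simp
qed

lemma hom_Sup_fin:
  assumes "lattice_hom_D n m h" "finite Y" "Y \<noteq> {}"
  shows "h (Sup_fin Y) i = (\<Union>y\<in>Y. h y i)"
  using assms(2,3)
proof (induction Y rule: finite_ne_induct)
  case (singleton x) then show ?case by simp
next
  case (insert x F)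
  then show ?case using assms(1) unfolding lattice_hom_D_def by simp
qed

lemma nfilter_pre:
  fixes h :: "'a::lattice \<Rightarrow> nat \<Rightarrow> nat set"
  assumes h: "lattice_hom_D n m h" and n: "n \<ge> 1"
  shows "n_filter n (h -` P n m)"
  unfolding n_filter_def
proof (intro conjI allI impI)
  fix x y assume a: "x \<in> h -` P n m \<and> x \<le> y"
  have "h y \<in> D n m" using h unfolding lattice_hom_D_def by blast
  moreover have "\<forall>i<m. h y i \<noteq> {}"
    using a hom_mono[OF h, of x y] unfolding P_def by blast
  ultimately show "y \<in> h -` P n m" unfolding P_def by simp
next
  fix X assume a: "finite X \<and> X \<noteq> {} \<and> X \<subseteq> h -` P n m \<and>
     (\<forall>Y. Y \<subseteq> X \<and> Y \<noteq> {} \<and> card Y \<le> n \<longrightarrow> Inf_fin Y \<in> h -` P n m)"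
  have hD: "\<And>x. h x \<in> D n m" using h unfolding lattice_hom_D_def by blast
  have "\<forall>i<m. (\<Inter>y\<in>X. h y i) \<noteq> {}"
  proof (intro allI impI)
    fix i assume im: "i < m"
    show "(\<Inter>y\<in>X. h y i) \<noteq> {}"
    proof
      assume e: "(\<Inter>y\<in>X. h y i) = {}"
      have ex: "\<forall>k. \<exists>x. x \<in> X \<and> k \<notin> h x i" using e by blast
      define f where "f k = (SOME x. x \<in> X \<and> k \<notin> h x i)" for k
      have f: "f k \<in> X \<and> k \<notin> h (f k) i" for k
        unfolding f_def using ex by (metis (mono_tags, lifting) someI_ex)
      let ?Y = "f ` {..<n}"
      have "?Y \<subseteq> X" using f by auto
      moreover have Yne: "?Y \<noteq> {}" using n by (auto simp: lessThan_empty_iff)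
      moreover have "card ?Y \<le> n" using card_image_le[of "{..<n}" f] by simp
      ultimately have "Inf_fin ?Y \<in> h -` P n m" using a by blast
      hence "h (Inf_fin ?Y) i \<noteq> {}" using im unfolding P_def by auto
      hence "(\<Inter>y\<in>?Y. h y i) \<noteq> {}" using hom_Inf_fin[OF h _ Yne, of i] by simp
      then obtain k where k: "k \<in> (\<Inter>y\<in>?Y. h y i)" by blast
      have "k \<in> h (f 0) i" using k n by auto
      hence "k < n" using hD[of "f 0"] im unfolding D_def by auto
      hence "k \<in> h (f k) i" using k by auto
      thus False using f by auto
    qed
  qed
  thus "Inf_fin X \<in> h -` P n m" using hom_Inf_fin[OF h, of X] a hD unfolding P_def by auto
qed

lemma mprime_pre:
  fixes h :: "'a::lattice \<Rightarrow> nat \<Rightarrow> nat set" and Fs :: "nat \<Rightarrow> 'a set"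
  assumes h: "lattice_hom_D n m h" and m: "m \<ge> 1"
    and I: "finite I" "I \<noteq> {}" and Fs: "\<forall>i\<in>I. n_filter n (Fs i)"
    and sub: "(\<Inter>i\<in>I. Fs i) \<subseteq> h -` P n m"
  shows "\<exists>J\<subseteq>I. J \<noteq> {} \<and> card J \<le> m \<and> (\<Inter>j\<in>J. Fs j) \<subseteq> h -` P n m"
proof -
  have hD: "\<And>x. h x \<in> D n m" using h unfolding lattice_hom_D_def by blast
  have up: "\<And>i x y. i \<in> I \<Longrightarrow> x \<in> Fs i \<Longrightarrow> x \<le> y \<Longrightarrow> y \<in> Fs i"
    using Fs unfolding n_filter_def by blast
  have ex: "\<exists>j\<in>I. \<forall>x\<in>Fs j. h x c \<noteq> {}" if c: "c < m" for c
  proof (rule ccontr)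
    assume "\<not> ?thesis"
    hence "\<forall>j\<in>I. \<exists>x\<in>Fs j. h x c = {}" by blast
    then obtain a where a: "\<forall>j\<in>I. a j \<in> Fs j \<and> h (a j) c = {}" by metis
    let ?b = "Sup_fin (a ` I)"
    have "?b \<in> Fs j" if "j \<in> I" for j
      using up[OF that, of "a j" ?b] a that I Sup_fin.coboundedI[of "a ` I" "a j"] by auto
    hence "?b \<in> h -` P n m" using sub by blast
    hence "h ?b c \<noteq> {}" using c unfolding P_def by auto
    moreover have "h ?b c = (\<Union>y\<in>a ` I. h y c)" using hom_Sup_fin[OF h, of "a ` I" c] I by auto
    ultimately show False using a by auto
  qed
  define g where "g c = (SOME j. j \<in> I \<and> (\<forall>x\<in>Fs j. h x c \<noteq> {}))" for c
  have g: "g c \<in> I \<and> (\<forall>x\<in>Fs (g c). h x c \<noteq> {})" if "c < m" for c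
    unfolding g_def by (rule someI_ex) (use ex[OF that] in blast)
  let ?J = "g ` {..<m}"
  have "?J \<subseteq> I" using g by auto
  moreover have "?J \<noteq> {}" using m by (auto simp: lessThan_empty_iff)
  moreover have "card ?J \<le> m" using card_image_le[of "{..<m}" g] by simp
  moreover have "(\<Inter>j\<in>?J. Fs j) \<subseteq> h -` P n m"
  proof
    fix x assume "x \<in> (\<Inter>j\<in>?J. Fs j)"
    hence "\<forall>c<m. h x c \<noteq> {}" using g by auto
    thus "x \<in> h -` P n m" using hD unfolding P_def by auto
  qed
  ultimately show ?thesis by blast
qed

lemma construct:
  fixes q :: "nat \<Rightarrow> nat \<Rightarrow> 'a::distrib_lattice" and len :: "nat \<Rightarrow> nat"
  assumes jq: "\<forall>i<m. \<forall>k<len i. jp (q i k)" and ln: "\<forall>i<m. len i \<le> n"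
  defines "h \<equiv> \<lambda>x i. if i < m then {k. k < len i \<and> q i k \<le> x} else {}"
  shows "lattice_hom_D n m h" and "h -` P n m = {x. \<forall>i<m. \<exists>k<len i. q i k \<le> x}"
proof -
  have hD: "h x \<in> D n m" for x using ln unfolding h_def D_def by auto
  show "lattice_hom_D n m h" unfolding lattice_hom_D_def
  proof (intro conjI allI)
    fix x show "h x \<in> D n m" by (rule hD)
  next
    fix x y show "h (inf x y) = (\<lambda>i. h x i \<inter> h y i)"
      unfolding h_def by (auto simp: fun_eq_iff)
  next
    fix x y show "h (sup x y) = (\<lambda>i. h x i \<union> h y i)"
      unfolding h_def using jq
      by (auto simp: fun_eq_iff jp_def intro: le_supI1 le_supI2)
  qed
  show "h -` P n m = {x. \<forall>i<m. \<exists>k<len i. q i k \<le> x}"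
    using hD unfolding P_def h_def by auto
qed

lemma Sup_fin_closed:
  fixes Q :: "'a::lattice set"
  assumes "finite A" "A \<noteq> {}" "A \<subseteq> Q" "\<And>u v. u \<in> Q \<Longrightarrow> v \<in> Q \<Longrightarrow> sup u v \<in> Q"
  shows "Sup_fin A \<in> Q"
  using assms
  by (induction A rule: finite_ne_induct) auto

lemma cover:
  fixes F :: "'a::{finite,distrib_lattice} set"
  assumes nf: "n_filter n F" and aF: "a \<notin> F" and n1: "n \<ge> 1"
  shows "\<exists>ps. length ps \<le> n \<and> (\<forall>p\<in>set ps. jp p \<and> \<not> p \<le> a) \<and> F \<subseteq> {w. \<exists>p\<in>set ps. p \<le> w}"
proof -
  let ?S = "{p. jp p \<and> \<not> p \<le> a}"
  have up: "\<And>x y. x \<in> F \<Longrightarrow> x \<le> y \<Longrightarrow> y \<in> F" using nf unfolding n_filter_def by blast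
  have "\<exists>H. H \<subseteq> ?S \<and> card H \<le> n \<and> F \<subseteq> {w. \<exists>p\<in>H. p \<le> w}"
  proof (rule ccontr)
    assume neg: "\<not> ?thesis"
    define xp where "xp p = Sup_fin {y. \<not> p \<le> y}" for p :: 'a
    have K: "y \<le> xp p \<longleftrightarrow> \<not> p \<le> y" if pS: "p \<in> ?S" for p y
    proof -
      have cl: "sup u v \<in> {y. \<not> p \<le> y}" if "u \<in> {y. \<not> p \<le> y}" "v \<in> {y. \<not> p \<le> y}" for u v
        using pS that unfolding jp_def by auto
      have ne: "{y. \<not> p \<le> y} \<noteq> {}" using pS by auto
      have xin: "xp p \<in> {y. \<not> p \<le> y}"
        unfolding xp_def by (rule Sup_fin_closed[OF _ ne order_refl cl]) auto
      show ?thesis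
      proof
        assume "y \<le> xp p" thus "\<not> p \<le> y" using xin order.trans[of p y "xp p"] by blast
      next
        assume "\<not> p \<le> y" thus "y \<le> xp p" unfolding xp_def by (intro Sup_fin.coboundedI) auto
      qed
    qed
    have C: "Inf_fin (xp ` H) \<in> F" if "H \<subseteq> ?S" "card H \<le> n" "H \<noteq> {}" for H
    proof -
      from neg that(1,2) have "\<not> F \<subseteq> {w. \<exists>p\<in>H. p \<le> w}" by blast
      then obtain w where w: "w \<in> F" "\<forall>p\<in>H. \<not> p \<le> w" by blast
      have "w \<le> Inf_fin (xp ` H)"
        using that w K by (intro Inf_fin.boundedI) auto
      thus ?thesis using up w by blast
    qed
    have "F \<noteq> {}"
    proof
      assume "F = {}"
      hence "{} \<subseteq> ?S \<and> card ({}::'a set) \<le> n \<and> F \<subseteq> {w. \<exists>p\<in>{}. p \<le> w}" by simp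
      thus False using neg by blast
    qed
    then obtain f where f: "f \<in> F" by blast
    have "\<not> f \<le> a" using up f aF by blast
    then obtain p0 where p0: "p0 \<in> ?S" using pft by blast
    let ?X = "xp ` ?S"
    have "finite ?X" by simp
    moreover have "?X \<noteq> {}" using p0 by blast
    moreover have "?X \<subseteq> F"
    proof
      fix x assume "x \<in> ?X"
      then obtain p where p: "p \<in> ?S" "x = xp p" by blast
      have "Inf_fin (xp ` {p}) \<in> F" using C[of "{p}"] p n1 by simp
      thus "x \<in> F" using p by simp
    qed
    moreover have "\<forall>Y. Y \<subseteq> ?X \<and> Y \<noteq> {} \<and> card Y \<le> n \<longrightarrow> Inf_fin Y \<in> F"
    proof (intro allI impI)
      fix Y assume Y: "Y \<subseteq> ?X \<and> Y \<noteq> {} \<and> card Y \<le> n"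
      define sel where "sel y = (SOME p. p \<in> ?S \<and> xp p = y)" for y
      have sel: "sel y \<in> ?S \<and> xp (sel y) = y" if "y \<in> Y" for y
      proof -
        have "\<exists>p. p \<in> ?S \<and> xp p = y" using Y that by blast
        thus ?thesis unfolding sel_def by (rule someI_ex)
      qed
      let ?H = "sel ` Y"
      have "xp ` ?H = Y" using sel by (force simp: image_image)
      moreover have "?H \<subseteq> ?S" using sel by auto
      moreover have "card ?H \<le> n" using card_image_le[of Y sel] Y
        by (meson finite finite_subset le_trans)
      moreover have "?H \<noteq> {}" using Y by auto
      ultimately show "Inf_fin Y \<in> F" using C by metis
    qed
    ultimately have z: "Inf_fin ?X \<in> F" using nf unfolding n_filter_def by blast
    hence "\<not> Inf_fin ?X \<le> a" using up aF by blast
    then obtain p where p: "jp p" "p \<le> Inf_fin ?X" "\<not> p \<le> a" using pft by blast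
    hence pS: "p \<in> ?S" by simp
    have "Inf_fin ?X \<le> xp p" using pS by (intro Inf_fin.coboundedI) auto
    hence "p \<le> xp p" using p by simp
    thus False using K[OF pS, of "xp p"] by simp
  qed
  then obtain H where H: "H \<subseteq> ?S" "card H \<le> n" "F \<subseteq> {w. \<exists>p\<in>H. p \<le> w}" by blast
  obtain ps where ps: "set ps = H" "distinct ps" using finite_distinct_list[of H] by auto
  have "length ps \<le> n" using ps H distinct_card by metis
  thus ?thesis using ps H by auto
qed

theorem mainTheorem11:
  fixes F :: "'a::{finite, distrib_lattice} set" and n m :: nat
  assumes "n \<ge> 1" and "m \<ge> 1"
  shows "m_prime_n_filter n m F \<longleftrightarrow> (\<exists>h. lattice_hom_D n m h \<and> F = h -` P n m)"
proof
  assume mp: "m_prime_n_filter n m F"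
  hence nf: "n_filter n F" unfolding m_prime_n_filter_def by blast
  consider "F = {}" | "F = UNIV" | "F \<noteq> {}" "F \<noteq> UNIV" by blast
  thus "\<exists>h. lattice_hom_D n m h \<and> F = h -` P n m"
  proof cases
    case 1
    let ?h = "\<lambda>(x::'a) (i::nat). {}::nat set"
    have "lattice_hom_D n m ?h" unfolding lattice_hom_D_def D_def by auto
    moreover have "\<forall>f\<in>P n m. f 0 \<noteq> {}" using assms(2) unfolding P_def by simp
    hence "?h -` P n m = {}" by auto
    ultimately show ?thesis using 1 by metis
  next
    case 2
    let ?h = "\<lambda>(x::'a) (i::nat). if i < m then {..<n} else {}"
    have "lattice_hom_D n m ?h" unfolding lattice_hom_D_def D_def by (auto simp: fun_eq_iff)
    moreover have "?h -` P n m = UNIV" using assms unfolding P_def D_def by (auto simp: lessThan_empty_iff)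
    ultimately show ?thesis using 2 by metis
  next
    case 3
    have prime: "\<forall>(I::nat set) (Fs::nat \<Rightarrow> 'a set).
          finite I \<and> I \<noteq> {} \<and> (\<forall>i\<in>I. n_filter n (Fs i)) \<and> (\<Inter>i\<in>I. Fs i) \<subseteq> F
          \<longrightarrow> (\<exists>J\<subseteq>I. J \<noteq> {} \<and> card J \<le> m \<and> (\<Inter>j\<in>J. Fs j) \<subseteq> F)"
      using mp 3 unfolding m_prime_n_filter_def by blast
    define ps where "ps a = (SOME ps. length ps \<le> n \<and> (\<forall>p\<in>set ps. jp p \<and> \<not> p \<le> a) \<and> F \<subseteq> {w. \<exists>p\<in>set ps. p \<le> w})" for a
    have ps: "length (ps a) \<le> n \<and> (\<forall>p\<in>set (ps a). jp p \<and> \<not> p \<le> a) \<and> F \<subseteq> {w. \<exists>p\<in>set (ps a). p \<le> w}"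
      if "a \<notin> F" for a
      unfolding ps_def by (rule someI_ex) (rule cover[OF nf that assms(1)])
    obtain as where as: "set as = - F" "distinct as" using finite_distinct_list[of "- F"] by auto
    define Fs where "Fs i = {w. \<exists>p\<in>set (ps (as ! i)). p \<le> w}" for i
    let ?I = "{..<length as}"
    have asF: "as ! i \<notin> F" if "i < length as" for i using as that nth_mem by fastforce
    have nfFs: "n_filter n (Fs i)" if "i \<in> ?I" for i
    proof -
      let ?q = "\<lambda>(j::nat) k. ps (as ! i) ! k" and ?len = "\<lambda>j::nat. length (ps (as ! i))"
      have jq: "\<forall>j<1. \<forall>k<?len j. jp (?q j k)" using ps[OF asF] that by auto
      have ln: "\<forall>j<1. ?len j \<le> n" using ps[OF asF] that by auto
      note c = construct[OF jq ln]
      have eq: "Fs i = {x. \<forall>j<1. \<exists>k<?len j. ?q j k \<le> x}"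
        unfolding Fs_def by (auto simp: in_set_conv_nth) (metis nth_mem)
      have "n_filter n {x. \<forall>j<1. \<exists>k<?len j. ?q j k \<le> x}"
        using nfilter_pre[OF c(1) assms(1)] unfolding c(2) .
      thus ?thesis unfolding eq .
    qed
    have "as \<noteq> []" using as 3 by auto
    hence I1: "?I \<noteq> {}" by (simp add: lessThan_empty_iff)
    have I2: "(\<Inter>i\<in>?I. Fs i) \<subseteq> F"
    proof
      fix x assume x: "x \<in> (\<Inter>i\<in>?I. Fs i)"
      show "x \<in> F"
      proof (rule ccontr)
        assume "x \<notin> F"
        then obtain i where i: "i < length as" "as ! i = x" using as by (metis ComplI in_set_conv_nth)
        hence "x \<in> Fs i" using x by auto
        thus False using ps[OF asF[OF i(1)]] i unfolding Fs_def by auto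
      qed
    qed
    have "\<exists>J\<subseteq>?I. J \<noteq> {} \<and> card J \<le> m \<and> (\<Inter>j\<in>J. Fs j) \<subseteq> F"
      by (intro prime[rule_format, of ?I Fs] conjI finite_lessThan I1 I2 ballI nfFs)
    then obtain J where J: "J \<subseteq> ?I" "J \<noteq> {}" "card J \<le> m" "(\<Inter>j\<in>J. Fs j) \<subseteq> F"
      by blast
    have FFs: "F \<subseteq> Fs i" if "i < length as" for i
      using ps[OF asF[OF that]] unfolding Fs_def by auto
    have fJ: "finite J" using J(1) finite_subset by blast
    obtain js where js: "set js = J" "distinct js" using finite_distinct_list[OF fJ] by auto
    have ljs: "length js \<le> m" using js J(3) distinct_card by metis
    have jsne: "js \<noteq> []" using js J(2) by auto
    define c where "c i = (if i < length js then js ! i else js ! 0)" for i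
    have cJ: "c i \<in> J" for i using js jsne unfolding c_def by (auto simp: nth_mem)
    have cI: "c i < length as" for i using cJ J(1) by auto
    let ?q = "\<lambda>i k. ps (as ! c i) ! k" and ?len = "\<lambda>i. length (ps (as ! c i))"
    have jq: "\<forall>i<m. \<forall>k<?len i. jp (?q i k)"
    proof (intro allI impI)
      fix i k assume "k < ?len i"
      thus "jp (?q i k)" using ps[OF asF[OF cI[of i]]] nth_mem by blast
    qed
    have ln: "\<forall>i<m. ?len i \<le> n"
    proof (intro allI impI)
      fix i show "?len i \<le> n" using ps[OF asF[OF cI[of i]]] by blast
    qed
    note cc = construct[OF jq ln]
    have "F = {x. \<forall>i<m. \<exists>k<?len i. ?q i k \<le> x}"
    proof
      show "F \<subseteq> {x. \<forall>i<m. \<exists>k<?len i. ?q i k \<le> x}"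
      proof (intro subsetI CollectI allI impI)
        fix x i assume "x \<in> F"
        hence "x \<in> Fs (c i)" using FFs[OF cI[of i]] by blast
        then obtain p where "p \<in> set (ps (as ! c i))" "p \<le> x" unfolding Fs_def by blast
        thus "\<exists>k<?len i. ?q i k \<le> x" by (metis in_set_conv_nth)
      qed
    next
      show "{x. \<forall>i<m. \<exists>k<?len i. ?q i k \<le> x} \<subseteq> F"
      proof
        fix x assume x: "x \<in> {x. \<forall>i<m. \<exists>k<?len i. ?q i k \<le> x}"
        have "x \<in> Fs j" if "j \<in> J" for j
        proof -
          have "j \<in> set js" using js(1) that by simp
          then obtain i where i: "i < length js" "js ! i = j" by (auto simp: in_set_conv_nth)
          have "c i = j" using i unfolding c_def by simp
          moreover have "i < m" using i ljs by simp
          moreover have "\<exists>k<?len i. ?q i k \<le> x" using x \<open>i < m\<close> by blast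
          ultimately obtain k where "k < length (ps (as ! j))" "ps (as ! j) ! k \<le> x" by auto
          thus ?thesis unfolding Fs_def by (metis nth_mem mem_Collect_eq)
        qed
        thus "x \<in> F" using J(4) by blast
      qed
    qed
    hence Feq: "F = {x. \<forall>i<m. \<exists>k<?len i. ?q i k \<le> x}" .
    show ?thesis
      apply (rule exI)
      apply (rule conjI)
       apply (rule cc(1))
      apply (subst cc(2))
      apply (rule Feq)
      done
  qed
next
  assume "\<exists>h. lattice_hom_D n m h \<and> F = h -` P n m"
  then obtain h where h: "lattice_hom_D n m h" and F: "F = h -` P n m" by blast
  show "m_prime_n_filter n m F"
    unfolding m_prime_n_filter_def F
  proof (intro conjI disjI2 allI impI)
    show "n_filter n (h -` P n m)" by (rule nfilter_pre[OF h assms(1)])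
  next
    fix I :: "nat set" and Fs :: "nat \<Rightarrow> 'a set"
    assume a: "finite I \<and> I \<noteq> {} \<and> (\<forall>i\<in>I. n_filter n (Fs i)) \<and> (\<Inter>i\<in>I. Fs i) \<subseteq> h -` P n m"
    show "\<exists>J\<subseteq>I. J \<noteq> {} \<and> card J \<le> m \<and> (\<Inter>j\<in>J. Fs j) \<subseteq> h -` P n m"
      using a by (intro mprime_pre[OF h assms(2)]) simp_all
  qed
qed

end
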